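(* Assume the no-anticipation, common-support and transition-independence conditions stated in the context. Then for every $t=T_0+1,\dots,T$, \[ \boldsymbol\mu^{\mathrm{ATT}}_t=\mathbb{E}\Big[\mathbf X_t-\mathbb{E}\big[\mathbf X_t\mid \mathbf X_1^{T_0},D=0\big]\;\Big|\;D=1\Big]. \]
   Context: Fix integers $T_0\ge1$, $T_1\ge1$, $T=T_0+T_1$, $K\ge2$, and a set of $K$ outcome categories $\mathcal Y=\{\bar y^{(1)},\dots,\bar y^{(K)}\}$. On a probability space, a unit has a binary treatment indicator $D\in\{0,1\}$ (treated units, $D=1$, are untreated in periods $1,\dots,T_0$ and treated in all periods $T_0+1,\dots,T$; control units are never treated) and potential outcomes $Y_t(0),Y_t(1)\in\mathcal Y$, $t=1,\dots,T$. For $d\in\{0,1\}$ let $\mathbf X_t(d)=(\mathbf 1(Y_t(d)=\bar y^{(1)}),\dots,\mathbf 1(Y_t(d)=\bar y^{(K)}))^\top\in\mathcal X:=\{x\in\{0,1\}^K:\sum_{k=1}^K x^{(k)}=1\}$. The observed outcome vectors are $\mathbf X_t=\mathbf X_t(0)$ for $1\le t\le T_0$ and $\mathbf X_t=D\mathbf X_t(1)+(1-D)\mathbf X_t(0)$ for $t\ge T_0+1$. Write $\mathbf X_1^{T_0}=(\mathbf X_1,\dots,\mathbf X_{T_0})$ and $\mathbf X_1^{T_0}(0)=(\mathbf X_1(0),\dots,\mathbf X_{T_0}(0))$. The average treatment effect on the treated is $\boldsymbol\mu^{\mathrm{ATT}}_t=\mathbb{E}[\mathbf X_t(1)-\mathbf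 X_t(0)\mid D=1]$ for $t\ge T_0+1$. Conditional probabilities/expectations are taken only given events of positive probability. No anticipation: $\mathbf X_t(1)=\mathbf X_t(0)$ for all $t\in\{1,\dots,T_0\}$. Common support: there is $\epsilon>0$ such that for every $\mathbf x_1^{T_0}\in\mathcal X^{T_0}$ with $\Pr(\mathbf X_1^{T_0}=\mathbf x_1^{T_0})>0$, $\epsilon\le\Pr(D=1\mid\mathbf X_1^{T_0}=\mathbf x_1^{T_0})<1-\epsilon$. Transition independence: for every $t=T_0+1,\dots,T$, all $\mathbf x_t\in\mathcal X$ and all $\mathbf x_1^{T_0}\in\mathcal X^{T_0}$, $\Pr(\mathbf X_t(0)=\mathbf x_t\mid \mathbf X_1^{T_0}(0)=\mathbf x_1^{T_0},D=1)=\Pr(\mathbf X_t(0)=\mathbf x_t\mid \mathbf X_1^{T_0}(0)=\mathbf x_1^{T_0},D=0)$. *)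

theory Defs
  imports "HOL-Probability.Probability"
begin

text \<open>Outcome vectors: the one-hot encoding in {0,1}^K, represented as a function
  nat \<Rightarrow> real with support in {1..K}; category k is ybar k.\<close>
definition onehot :: "nat \<Rightarrow> (nat \<Rightarrow> 'y) \<Rightarrow> 'y \<Rightarrow> nat \<Rightarrow> real" where
  "onehot K ybar y = (\<lambda>k. if 1 \<le> k \<and> k \<le> K \<and> y = ybar k then 1 else 0)"

definition Xset :: "nat \<Rightarrow> (nat \<Rightarrow> real) set" where
  "Xset K = {x. (\<forall>k. x k \<in> {0, 1}) \<and> (\<forall>k. k \<notin> {1..K} \<longrightarrow> x k = 0)
              \<and> (\<Sum>k=1..K. x k) = 1}"

definition Yobs :: "nat \<Rightarrow> ('a \<Rightarrow> bool) \<Rightarrow> (nat \<Rightarrow> 'a \<Rightarrow> 'y) \<Rightarrow> (nat \<Rightarrow> 'a \<Rightarrow> 'y)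
    \<Rightarrow> nat \<Rightarrow> 'a \<Rightarrow> 'y" where
  "Yobs T0 D Y0 Y1 t \<omega> = (if t \<le> T0 then Y0 t \<omega> else if D \<omega> then Y1 t \<omega> else Y0 t \<omega>)"

definition hist_event :: "'a measure \<Rightarrow> nat \<Rightarrow> (nat \<Rightarrow> 'y) \<Rightarrow> nat \<Rightarrow> (nat \<Rightarrow> 'a \<Rightarrow> 'y)
    \<Rightarrow> (nat \<Rightarrow> nat \<Rightarrow> real) \<Rightarrow> 'a set" where
  "hist_event M K ybar T0 Y xs =
     {\<omega> \<in> space M. \<forall>t\<in>{1..T0}. onehot K ybar (Y t \<omega>) = xs t}"

definition cprob :: "'a measure \<Rightarrow> 'a set \<Rightarrow> 'a set \<Rightarrow> real" where
  "cprob M A B = measure M (A \<inter> B) / measure M B"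

definition cexp :: "'a measure \<Rightarrow> ('a \<Rightarrow> real) \<Rightarrow> 'a set \<Rightarrow> real" where
  "cexp M f B = (\<integral>\<omega>. f \<omega> * indicator B \<omega> \<partial>M) / measure M B"

end

theory Submission
  imports Defs
begin

lemma pred_sets: assumes "f \<in> M \<rightarrow>\<^sub>M count_space UNIV" shows "{\<omega> \<in> space M. P (f \<omega>)} \<in> sets M"
proof -
  have "{\<omega> \<in> space M. P (f \<omega>)} = f -` {y. P y} \<inter> space M" by auto
  also have "... \<in> sets M" by (rule measurable_sets[OF assms]) simp
  finally show ?thesis .
qed

lemma int_simple:
  fixes c :: "'b \<Rightarrow> real"
  assumes "prob_space M" "finite R" "\<And>h. h\<in>R \<Longrightarrow> S h \<in> sets M"
    "\<And>\<omega>. \<omega>\<in>space M \<Longrightarrow> f \<omega> = (\<Sum>h\<in>R. c h * indicator (S h) \<omega>)"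
  shows "integrable M f \<and> integral\<^sup>L M f = (\<Sum>h\<in>R. c h * measure M (S h))"
proof -
  interpret prob_space M by fact
  have i: "integrable M (\<lambda>\<omega>. c h * indicator (S h) \<omega> :: real)" if "h\<in>R" for h
    using that assms(3) by (intro integrable_mult_right integrable_real_indicator) (auto simp: less_top[symmetric])
  have I: "integrable M (\<lambda>\<omega>. \<Sum>h\<in>R. c h * indicator (S h) \<omega>)" using i by (intro Bochner_Integration.integrable_sum) auto
  have E: "integral\<^sup>L M (\<lambda>\<omega>. \<Sum>h\<in>R. c h * indicator (S h) \<omega>) = (\<Sum>h\<in>R. c h * measure M (S h))"
    using i assms(3) by (subst Bochner_Integration.integral_sum) (auto simp: Int_absorb2 sets.sets_into_space intro!: sum.cong)
  have "integrable M f" using I by (subst Bochner_Integration.integrable_cong[OF refl assms(4)]) auto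
  moreover have "integral\<^sup>L M f = integral\<^sup>L M (\<lambda>\<omega>. \<Sum>h\<in>R. c h * indicator (S h) \<omega>)"
    by (rule Bochner_Integration.integral_cong) (auto simp: assms(4))
  ultimately show ?thesis using E by simp
qed

lemma onehot_inj: assumes "y \<in> ybar ` {1..K}" "onehot K ybar y = onehot K ybar y'" shows "y' = y"
proof -
  obtain j where j: "j \<in> {1..K}" "y = ybar j" using assms(1) by auto
  have "onehot K ybar y j = onehot K ybar y' j" using assms(2) by simp
  then show ?thesis using j by (auto simp: onehot_def split: if_splits)
qed

lemma onehot_Xset: assumes "inj_on ybar {1..K}" "j \<in> {1..K}" shows "onehot K ybar (ybar j) \<in> Xset K"
proof -
  have "(\<Sum>i=1..K. onehot K ybar (ybar j) i) = (\<Sum>i\<in>{1..K}. if i = j then 1 else 0)"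
    using assms by (intro sum.cong) (auto simp: onehot_def dest: inj_onD)
  also have "... = 1" using assms(2) by simp
  finally show ?thesis unfolding Xset_def by (auto simp: onehot_def)
qed

theorem proposition1:
  fixes M :: "'a measure" and D :: "'a \<Rightarrow> bool"
    and Y0 Y1 :: "nat \<Rightarrow> 'a \<Rightarrow> 'y" and ybar :: "nat \<Rightarrow> 'y"
    and T0 T1 T K :: nat
  assumes prob: "prob_space M"
    and T0: "T0 \<ge> 1" and T1: "T1 \<ge> 1" and TT: "T = T0 + T1" and K: "K \<ge> 2"
    and ybar_inj: "inj_on ybar {1..K}"
    and D_meas: "D \<in> M \<rightarrow>\<^sub>M count_space UNIV"
    and Y0_meas: "\<And>t. t \<in> {1..T} \<Longrightarrow> Y0 t \<in> M \<rightarrow>\<^sub>M count_space UNIV"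
    and Y1_meas: "\<And>t. t \<in> {1..T} \<Longrightarrow> Y1 t \<in> M \<rightarrow>\<^sub>M count_space UNIV"
    and Y0_range: "\<And>t \<omega>. t \<in> {1..T} \<Longrightarrow> \<omega> \<in> space M \<Longrightarrow> Y0 t \<omega> \<in> ybar ` {1..K}"
    and Y1_range: "\<And>t \<omega>. t \<in> {1..T} \<Longrightarrow> \<omega> \<in> space M \<Longrightarrow> Y1 t \<omega> \<in> ybar ` {1..K}"
    and no_anticipation: "\<And>t \<omega>. t \<in> {1..T0} \<Longrightarrow> \<omega> \<in> space M \<Longrightarrow>
           onehot K ybar (Y1 t \<omega>) = onehot K ybar (Y0 t \<omega>)"
    and common_support: "\<exists>\<epsilon>>0. \<forall>xs. (\<forall>t\<in>{1..T0}. xs t \<in> Xset K) \<longrightarrow>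
           measure M (hist_event M K ybar T0 (Yobs T0 D Y0 Y1) xs) > 0 \<longrightarrow>
           \<epsilon> \<le> cprob M {\<omega> \<in> space M. D \<omega>} (hist_event M K ybar T0 (Yobs T0 D Y0 Y1) xs)
           \<and> cprob M {\<omega> \<in> space M. D \<omega>} (hist_event M K ybar T0 (Yobs T0 D Y0 Y1) xs) < 1 - \<epsilon>"
    and transition_independence: "\<And>t x xs. t \<in> {T0+1..T} \<Longrightarrow> x \<in> Xset K \<Longrightarrow>
           (\<forall>s\<in>{1..T0}. xs s \<in> Xset K) \<Longrightarrow>
           measure M (hist_event M K ybar T0 Y0 xs \<inter> {\<omega> \<in> space M. D \<omega>}) > 0 \<Longrightarrow>
           measure M (hist_event M K ybar T0 Y0 xs \<inter> {\<omega> \<in> space M. \<not> D \<omega>}) > 0 \<Longrightarrow>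
           cprob M {\<omega> \<in> space M. onehot K ybar (Y0 t \<omega>) = x}
                 (hist_event M K ybar T0 Y0 xs \<inter> {\<omega> \<in> space M. D \<omega>})
         = cprob M {\<omega> \<in> space M. onehot K ybar (Y0 t \<omega>) = x}
                 (hist_event M K ybar T0 Y0 xs \<inter> {\<omega> \<in> space M. \<not> D \<omega>})"
  shows "\<forall>t\<in>{T0+1..T}.
     (\<lambda>k. cexp M (\<lambda>\<omega>. onehot K ybar (Y1 t \<omega>) k - onehot K ybar (Y0 t \<omega>) k)
                 {\<omega> \<in> space M. D \<omega>})
   = (\<lambda>k. cexp M (\<lambda>\<omega>. onehot K ybar (Yobs T0 D Y0 Y1 t \<omega>) k
              - cexp M (\<lambda>\<omega>'. onehot K ybar (Yobs T0 D Y0 Y1 t \<omega>') k)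
                  (hist_event M K ybar T0 (Yobs T0 D Y0 Y1)
                      (\<lambda>s. onehot K ybar (Yobs T0 D Y0 Y1 s \<omega>))
                   \<inter> {\<omega>' \<in> space M. \<not> D \<omega>'}))
                 {\<omega> \<in> space M. D \<omega>})"
proof -
  interpret prob_space M by (rule prob)
  define A where "A = {\<omega> \<in> space M. D \<omega>}"
  define N where "N = {\<omega> \<in> space M. \<not> D \<omega>}"
  define R where "R = PiE {1..T0} (\<lambda>_. ybar ` {1..K})"
  define r where "r = (\<lambda>\<omega>. restrict (\<lambda>s. Y0 s \<omega>) {1..T0})"
  define E where "E = (\<lambda>h. hist_event M K ybar T0 Y0 (\<lambda>s. onehot K ybar (h s)))"
  have finR: "finite R" unfolding R_def by (intro finite_PiE) auto
  have A_sets: "A \<in> sets M" unfolding A_def using pred_sets[OF D_meas, of "\<lambda>b. b"] by simp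
  have N_sets: "N \<in> sets M" unfolding N_def using pred_sets[OF D_meas, of "\<lambda>b. \<not> b"] by simp
  have T0T: "T0 \<le> T" using TT by simp
  have hist_sets: "hist_event M K ybar T0 Y0 xs \<in> sets M" for xs
  proof -
    have "{\<omega>\<in>space M. onehot K ybar (Y0 s \<omega>) = xs s} \<in> sets M" if "s\<in>{1..T0}" for s
      using pred_sets[OF Y0_meas[of s]] that T0T by auto
    then show ?thesis unfolding hist_event_def
      by (intro sets.sets_Collect_finite_All') (use T0 in auto)
  qed
  have E_sets: "E h \<in> sets M" for h unfolding E_def by (rule hist_sets)
  have E_space: "E h \<subseteq> space M" for h unfolding E_def hist_event_def by auto
  have r_R: "r \<omega> \<in> R" if "\<omega> \<in> space M" for \<omega>
    using Y0_range T0T that by (auto simp: r_def R_def)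
  have E_iff: "\<omega> \<in> E h \<longleftrightarrow> r \<omega> = h" if \<omega>: "\<omega> \<in> space M" and h: "h \<in> R" for \<omega> h
  proof
    assume "\<omega> \<in> E h"
    then have a: "\<forall>s\<in>{1..T0}. onehot K ybar (Y0 s \<omega>) = onehot K ybar (h s)"
      by (simp add: E_def hist_event_def)
    show "r \<omega> = h"
    proof
      fix s show "r \<omega> s = h s"
      proof (cases "s \<in> {1..T0}")
        case True
        then have "h s \<in> ybar ` {1..K}" using h by (auto simp: R_def)
        then show ?thesis using onehot_inj[of "h s" ybar K "Y0 s \<omega>"] a True by (auto simp: r_def)
      next
        case False then show ?thesis using h by (auto simp: r_def R_def)
      qed
    qed
  next
    assume "r \<omega> = h" then show "\<omega> \<in> E h" using \<omega> by (auto simp: E_def hist_event_def r_def)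
  qed
  have Eobs: "hist_event M K ybar T0 (Yobs T0 D Y0 Y1) xs = hist_event M K ybar T0 Y0 xs" for xs
    by (auto simp: hist_event_def Yobs_def)
  have E\<omega>: "hist_event M K ybar T0 (Yobs T0 D Y0 Y1) (\<lambda>s. onehot K ybar (Yobs T0 D Y0 Y1 s \<omega>)) = E (r \<omega>)"
    for \<omega> unfolding Eobs by (auto simp: E_def hist_event_def r_def Yobs_def)
  have hXset: "onehot K ybar (h s) \<in> Xset K" if "h \<in> R" "s \<in> {1..T0}" for h s
  proof -
    have "h s \<in> ybar ` {1..K}" using that by (auto simp: R_def)
    then obtain j where "j \<in> {1..K}" "h s = ybar j" by blast
    then show ?thesis using onehot_Xset[OF ybar_inj] by simp
  qed
  obtain \<epsilon> where \<epsilon>: "\<epsilon> > 0" "\<forall>xs. (\<forall>t\<in>{1..T0}. xs t \<in> Xset K) \<longrightarrow>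
           measure M (hist_event M K ybar T0 (Yobs T0 D Y0 Y1) xs) > 0 \<longrightarrow>
           \<epsilon> \<le> cprob M {\<omega> \<in> space M. D \<omega>} (hist_event M K ybar T0 (Yobs T0 D Y0 Y1) xs)
           \<and> cprob M {\<omega> \<in> space M. D \<omega>} (hist_event M K ybar T0 (Yobs T0 D Y0 Y1) xs) < 1 - \<epsilon>"
    using common_support by blast
  show ?thesis
  proof (intro ballI ext)
    fix t k assume t: "t \<in> {T0+1..T}"
    have t1: "t \<in> {1..T}" "\<not> t \<le> T0" using t T0 by auto
    define G where "G h = cexp M (\<lambda>\<omega>'. onehot K ybar (Yobs T0 D Y0 Y1 t \<omega>') k) (E h \<inter> N)" for h
    define F where "F = {\<omega>\<in>space M. 1 \<le> k \<and> k \<le> K \<and> Y0 t \<omega> = ybar k}"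
    define F1 where "F1 = {\<omega>\<in>space M. 1 \<le> k \<and> k \<le> K \<and> Y1 t \<omega> = ybar k}"
    have F_sets: "F \<in> sets M" unfolding F_def by (rule pred_sets[OF Y0_meas[OF t1(1)]])
    have F1_sets: "F1 \<in> sets M" unfolding F1_def by (rule pred_sets[OF Y1_meas[OF t1(1)]])
    have oh0: "onehot K ybar (Y0 t \<omega>) k = indicator F \<omega>" if "\<omega> \<in> space M" for \<omega>
      using that by (auto simp: onehot_def F_def)
    have oh1: "onehot K ybar (Y1 t \<omega>) k = indicator F1 \<omega>" if "\<omega> \<in> space M" for \<omega>
      using that by (auto simp: onehot_def F1_def)
    have I1: "integrable M (\<lambda>\<omega>. onehot K ybar (Y1 t \<omega>) k * indicator A \<omega>)"
      using int_simple[OF prob, of "{0::nat}" "\<lambda>_. F1 \<inter> A" "\<lambda>\<omega>. onehot K ybar (Y1 t \<omega>) k * indicator A \<omega>" "\<lambda>_. 1"]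
        F1_sets A_sets oh1 by (auto simp: indicator_inter_arith)
    have I0: "integrable M (\<lambda>\<omega>. onehot K ybar (Y0 t \<omega>) k * indicator A \<omega>) \<and>
        integral\<^sup>L M (\<lambda>\<omega>. onehot K ybar (Y0 t \<omega>) k * indicator A \<omega>) = (\<Sum>h\<in>R. 1 * measure M (F \<inter> E h \<inter> A))"
    proof (rule int_simple[OF prob finR])
      show "F \<inter> E h \<inter> A \<in> sets M" for h using F_sets E_sets A_sets by auto
      fix \<omega> assume \<omega>: "\<omega> \<in> space M"
      have "(\<Sum>h\<in>R. 1 * indicator (F \<inter> E h \<inter> A) \<omega> :: real) = (\<Sum>h\<in>R. if r \<omega> = h then indicator F \<omega> * indicator A \<omega> else 0)"
        using E_iff[OF \<omega>] by (intro sum.cong) (auto simp: indicator_inter_arith indicator_def)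
      also have "... = indicator F \<omega> * indicator A \<omega>" using r_R[OF \<omega>] finR by simp
      finally show "onehot K ybar (Y0 t \<omega>) k * indicator A \<omega> = (\<Sum>h\<in>R. 1 * indicator (F \<inter> E h \<inter> A) \<omega>)"
        using oh0[OF \<omega>] by simp
    qed
    have Ig: "integrable M (\<lambda>\<omega>. G (r \<omega>) * indicator A \<omega>) \<and>
        integral\<^sup>L M (\<lambda>\<omega>. G (r \<omega>) * indicator A \<omega>) = (\<Sum>h\<in>R. G h * measure M (E h \<inter> A))"
    proof (rule int_simple[OF prob finR])
      show "E h \<inter> A \<in> sets M" for h using E_sets A_sets by auto
      fix \<omega> assume \<omega>: "\<omega> \<in> space M"
      have "(\<Sum>h\<in>R. G h * indicator (E h \<inter> A) \<omega> :: real) = (\<Sum>h\<in>R. if r \<omega> = h then G (r \<omega>) * indicator A \<omega> else 0)"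
        using E_iff[OF \<omega>] by (intro sum.cong) (auto simp: indicator_inter_arith indicator_def)
      also have "... = G (r \<omega>) * indicator A \<omega>" using r_R[OF \<omega>] finR by simp
      finally show "G (r \<omega>) * indicator A \<omega> = (\<Sum>h\<in>R. G h * indicator (E h \<inter> A) \<omega>)" by simp
    qed
    have Gform: "G h = measure M (F \<inter> (E h \<inter> N)) / measure M (E h \<inter> N)" for h
    proof -
      have "integrable M (\<lambda>\<omega>'. onehot K ybar (Yobs T0 D Y0 Y1 t \<omega>') k * indicator (E h \<inter> N) \<omega>') \<and>
         integral\<^sup>L M (\<lambda>\<omega>'. onehot K ybar (Yobs T0 D Y0 Y1 t \<omega>') k * indicator (E h \<inter> N) \<omega>')
           = (\<Sum>_\<in>{0::nat}. 1 * measure M (F \<inter> (E h \<inter> N)))"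
      proof (rule int_simple[OF prob])
        show "F \<inter> (E h \<inter> N) \<in> sets M" using F_sets E_sets N_sets by auto
        fix \<omega> assume \<omega>: "\<omega> \<in> space M"
        show "onehot K ybar (Yobs T0 D Y0 Y1 t \<omega>) k * indicator (E h \<inter> N) \<omega> = (\<Sum>_\<in>{0::nat}. 1 * indicator (F \<inter> (E h \<inter> N)) \<omega>)"
          using oh0[OF \<omega>] t1 by (auto simp: Yobs_def N_def indicator_def)
      qed simp
      then show ?thesis by (simp add: G_def cexp_def)
    qed
    have termeq: "G h * measure M (E h \<inter> A) = 1 * measure M (F \<inter> E h \<inter> A)" if h: "h \<in> R" for h
    proof (cases "k \<in> {1..K}")
      case False
      then have "F = {}" by (auto simp: F_def)
      then show ?thesis by (simp add: Gform)
    next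
      case k: True
      show ?thesis
      proof (cases "measure M (E h \<inter> A) = 0")
        case True
        have "measure M (F \<inter> E h \<inter> A) \<le> measure M (E h \<inter> A)"
          using E_sets A_sets by (intro finite_measure_mono) auto
        then show ?thesis using True measure_nonneg[of M "F \<inter> E h \<inter> A"] by simp
      next
        case False
        then have pA: "measure M (E h \<inter> A) > 0" using measure_nonneg[of M "E h \<inter> A"] by linarith
        have "measure M (E h \<inter> A) \<le> measure M (E h)"
          using E_sets A_sets by (intro finite_measure_mono) auto
        then have pE: "measure M (E h) > 0" using pA by linarith
        have "cprob M A (E h) < 1 - \<epsilon>"
          using \<epsilon>(2)[rule_format, of "\<lambda>s. onehot K ybar (h s)"] hXset[OF h] pE
          by (auto simp: Eobs E_def A_def)
        then have "measure M (A \<inter> E h) < measure M (E h)"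
        proof -
          have "(1 - \<epsilon>) * measure M (E h) \<le> measure M (E h)" using pE \<epsilon>(1) by (simp add: algebra_simps)
          moreover have "measure M (A \<inter> E h) < (1 - \<epsilon>) * measure M (E h)"
            using \<open>cprob M A (E h) < 1 - \<epsilon>\<close> pE by (simp add: cprob_def divide_less_eq)
          ultimately show ?thesis by linarith
        qed
        moreover have "measure M (E h \<inter> N) = measure M (E h) - measure M (E h \<inter> A)"
        proof -
          have "E h \<inter> N = E h - A" using E_space by (auto simp: A_def N_def)
          then show ?thesis using finite_measure_Diff'[OF E_sets A_sets] by simp
        qed
        ultimately have pN: "measure M (E h \<inter> N) > 0" by (simp add: Int_commute)
        have Fx: "{\<omega> \<in> space M. onehot K ybar (Y0 t \<omega>) = onehot K ybar (ybar k)} = F"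
          using k onehot_inj[of "ybar k" ybar K] by (auto simp: F_def)
        have XA: "hist_event M K ybar T0 Y0 (\<lambda>s. onehot K ybar (h s)) \<inter> {\<omega> \<in> space M. D \<omega>} = E h \<inter> A"
          by (simp add: E_def A_def)
        have XN: "hist_event M K ybar T0 Y0 (\<lambda>s. onehot K ybar (h s)) \<inter> {\<omega> \<in> space M. \<not> D \<omega>} = E h \<inter> N"
          by (simp add: E_def N_def)
        have hX: "\<forall>s\<in>{1..T0}. onehot K ybar (h s) \<in> Xset K" using hXset[OF h] by blast
        have TI: "cprob M F (E h \<inter> A) = cprob M F (E h \<inter> N)"
          by (rule transition_independence[OF t onehot_Xset[OF ybar_inj k], of "\<lambda>s. onehot K ybar (h s)",
             unfolded Fx XA XN, OF hX pA pN])
        then have "G h = measure M (F \<inter> (E h \<inter> A)) / measure M (E h \<inter> A)"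
          by (simp add: Gform cprob_def)
        then show ?thesis using pA by (simp add: Int_assoc)
      qed
    qed
    have eq0: "integral\<^sup>L M (\<lambda>\<omega>. onehot K ybar (Y0 t \<omega>) k * indicator A \<omega>)
        = integral\<^sup>L M (\<lambda>\<omega>. G (r \<omega>) * indicator A \<omega>)"
    proof -
      have "(\<Sum>h\<in>R. G h * measure M (E h \<inter> A)) = (\<Sum>h\<in>R. 1 * measure M (F \<inter> E h \<inter> A))"
        by (rule sum.cong) (simp_all add: termeq)
      then show ?thesis using I0 Ig by simp
    qed
    have L: "integral\<^sup>L M (\<lambda>\<omega>. (onehot K ybar (Y1 t \<omega>) k - onehot K ybar (Y0 t \<omega>) k) * indicator A \<omega>)
       = integral\<^sup>L M (\<lambda>\<omega>. onehot K ybar (Y1 t \<omega>) k * indicator A \<omega>)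
         - integral\<^sup>L M (\<lambda>\<omega>. onehot K ybar (Y0 t \<omega>) k * indicator A \<omega>)"
      using I1 I0 by (subst Bochner_Integration.integral_diff[symmetric]) (auto simp: algebra_simps)
    have Rr: "integral\<^sup>L M (\<lambda>\<omega>. (onehot K ybar (Yobs T0 D Y0 Y1 t \<omega>) k
              - cexp M (\<lambda>\<omega>'. onehot K ybar (Yobs T0 D Y0 Y1 t \<omega>') k)
                  (hist_event M K ybar T0 (Yobs T0 D Y0 Y1)
                      (\<lambda>s. onehot K ybar (Yobs T0 D Y0 Y1 s \<omega>))
                   \<inter> {\<omega>' \<in> space M. \<not> D \<omega>'})) * indicator A \<omega>)
       = integral\<^sup>L M (\<lambda>\<omega>. onehot K ybar (Y1 t \<omega>) k * indicator A \<omega> - G (r \<omega>) * indicator A \<omega>)"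
    proof (intro Bochner_Integration.integral_cong refl)
      fix \<omega> assume \<omega>: "\<omega> \<in> space M"
      have c: "cexp M (\<lambda>\<omega>'. onehot K ybar (Yobs T0 D Y0 Y1 t \<omega>') k)
                  (hist_event M K ybar T0 (Yobs T0 D Y0 Y1)
                      (\<lambda>s. onehot K ybar (Yobs T0 D Y0 Y1 s \<omega>))
                   \<inter> {\<omega>' \<in> space M. \<not> D \<omega>'}) = G (r \<omega>)"
        unfolding E\<omega> G_def N_def ..
      show "(onehot K ybar (Yobs T0 D Y0 Y1 t \<omega>) k
              - cexp M (\<lambda>\<omega>'. onehot K ybar (Yobs T0 D Y0 Y1 t \<omega>') k)
                  (hist_event M K ybar T0 (Yobs T0 D Y0 Y1)
                      (\<lambda>s. onehot K ybar (Yobs T0 D Y0 Y1 s \<omega>))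
                   \<inter> {\<omega>' \<in> space M. \<not> D \<omega>'})) * indicator A \<omega>
         = onehot K ybar (Y1 t \<omega>) k * indicator A \<omega> - G (r \<omega>) * indicator A \<omega>"
      proof (cases "D \<omega>")
        case True
        then have "indicator A \<omega> = (1::real)" "Yobs T0 D Y0 Y1 t \<omega> = Y1 t \<omega>"
          using \<omega> t1 by (auto simp: A_def Yobs_def)
        then show ?thesis unfolding c by simp
      next
        case False
        then have "indicator A \<omega> = (0::real)" by (auto simp: A_def)
        then show ?thesis by simp
      qed
    qed
    also have "... = integral\<^sup>L M (\<lambda>\<omega>. onehot K ybar (Y1 t \<omega>) k * indicator A \<omega>)
         - integral\<^sup>L M (\<lambda>\<omega>. G (r \<omega>) * indicator A \<omega>)"
      using I1 Ig by (intro Bochner_Integration.integral_diff) auto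
    finally show "cexp M (\<lambda>\<omega>. onehot K ybar (Y1 t \<omega>) k - onehot K ybar (Y0 t \<omega>) k)
                 {\<omega> \<in> space M. D \<omega>}
      = cexp M (\<lambda>\<omega>. onehot K ybar (Yobs T0 D Y0 Y1 t \<omega>) k
              - cexp M (\<lambda>\<omega>'. onehot K ybar (Yobs T0 D Y0 Y1 t \<omega>') k)
                  (hist_event M K ybar T0 (Yobs T0 D Y0 Y1)
                      (\<lambda>s. onehot K ybar (Yobs T0 D Y0 Y1 s \<omega>))
                   \<inter> {\<omega>' \<in> space M. \<not> D \<omega>'}))
                 {\<omega> \<in> space M. D \<omega>}"
      unfolding cexp_def A_def[symmetric] using L eq0 by simp
  qed
qed

end
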